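(* Let $L$ be a consistent pretransitive logic and $k\le\omega$. Then the $k$-canonical frame of $L$ is $1$-heavy: for every point $x$ of depth greater than $1$ there is $y$ with $xR^*y$ and the depth of $y$ equal to $1$.
   Context: Logics are normal $n$-modal logics; a $k$-formula uses only $p_j$, $j<k$. $L$ is pretransitive if $L\vdash\Diamond^{m+1}p\to\Diamond^{\le m}p$ for some $m$, where $\Diamond^0\varphi=\varphi$, $\Diamond^{i+1}\varphi=\Diamond^i(\bigvee_{j<n}\Diamond_j\varphi)$, $\Diamond^{\le m}\varphi=\bigvee_{i\le m}\Diamond^i\varphi$. The $k$-canonical frame has points the maximal $L$-consistent sets of $k$-formulas, $xR_iy$ iff $\Diamond_i\psi\in x$ for all $k$-formulas $\psi\in y$. $R=\bigcup_iR_i$ and $R^*$ is its reflexive transitive closure. Clusters are classes of $R^*\cap(R^* )^{-1}$; the skeleton is the poset of clusters with $C\le D$ iff $xR^*y$ for some $x\in C,y\in D$; the height of a frame is the maximal size of a chain in its skeleton; the depth of $x$ is the height of the restriction of the frame to $R^*(x)$. For $0<h<\omega$, a frame is $h$-heavy if for every point $x$ of depth $>h$ there is $y$ with $xR^*y$ and depth of $y$ exactly $h$. *)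

theory Defs
  imports Main "HOL-Library.Extended_Nat"
begin

datatype fm = Var nat | Bot | Imp fm fm | Box nat fm

definition Neg :: "fm \<Rightarrow> fm" where "Neg a = Imp a Bot"
definition Or :: "fm \<Rightarrow> fm \<Rightarrow> fm" where "Or a b = Imp (Neg a) b"
definition And :: "fm \<Rightarrow> fm \<Rightarrow> fm" where "And a b = Neg (Imp a (Neg b))"
definition Top :: fm where "Top = Neg Bot"
definition Dia :: "nat \<Rightarrow> fm \<Rightarrow> fm" where "Dia i a = Neg (Box i (Neg a))"

definition disj :: "fm list \<Rightarrow> fm" where "disj xs = foldr Or xs Bot"
definition conj :: "fm list \<Rightarrow> fm" where "conj xs = foldr And xs Top"

fun nfm :: "nat \<Rightarrow> fm \<Rightarrow> bool" where
  "nfm n (Var j) = True"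
| "nfm n Bot = True"
| "nfm n (Imp a b) = (nfm n a \<and> nfm n b)"
| "nfm n (Box i a) = (i < n \<and> nfm n a)"

fun vars_lt :: "enat \<Rightarrow> fm \<Rightarrow> bool" where
  "vars_lt k (Var j) = (enat j < k)"
| "vars_lt k Bot = True"
| "vars_lt k (Imp a b) = (vars_lt k a \<and> vars_lt k b)"
| "vars_lt k (Box i a) = vars_lt k a"

definition kfm :: "nat \<Rightarrow> enat \<Rightarrow> fm \<Rightarrow> bool" where
  "kfm n k a = (nfm n a \<and> vars_lt k a)"

fun peval :: "(fm \<Rightarrow> bool) \<Rightarrow> fm \<Rightarrow> bool" where
  "peval v (Var j) = v (Var j)"
| "peval v Bot = False"
| "peval v (Imp a b) = (peval v a \<longrightarrow> peval v b)"
| "peval v (Box i a) = v (Box i a)"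

definition tautology :: "fm \<Rightarrow> bool" where
  "tautology a = (\<forall>v. peval v a)"

fun subst :: "(nat \<Rightarrow> fm) \<Rightarrow> fm \<Rightarrow> fm" where
  "subst s (Var j) = s j"
| "subst s Bot = Bot"
| "subst s (Imp a b) = Imp (subst s a) (subst s b)"
| "subst s (Box i a) = Box i (subst s a)"

definition normal_logic :: "nat \<Rightarrow> fm set \<Rightarrow> bool" where
  "normal_logic n L \<longleftrightarrow>
     L \<subseteq> {a. nfm n a}
   \<and> (\<forall>a. nfm n a \<and> tautology a \<longrightarrow> a \<in> L)
   \<and> (\<forall>i<n. Imp (Box i (Imp (Var 0) (Var 1))) (Imp (Box i (Var 0)) (Box i (Var 1))) \<in> L)
   \<and> (\<forall>a b. a \<in> L \<longrightarrow> Imp a b \<in> L \<longrightarrow> b \<in> L)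
   \<and> (\<forall>i a. i < n \<longrightarrow> a \<in> L \<longrightarrow> Box i a \<in> L)
   \<and> (\<forall>s a. a \<in> L \<longrightarrow> (\<forall>j. nfm n (s j)) \<longrightarrow> subst s a \<in> L)"

definition consistent_logic :: "fm set \<Rightarrow> bool" where
  "consistent_logic L \<longleftrightarrow> Bot \<notin> L"

definition dia_any :: "nat \<Rightarrow> fm \<Rightarrow> fm" where
  "dia_any n a = disj (map (\<lambda>j. Dia j a) [0..<n])"

fun dia_iter :: "nat \<Rightarrow> nat \<Rightarrow> fm \<Rightarrow> fm" where
  "dia_iter n 0 a = a"
| "dia_iter n (Suc i) a = dia_iter n i (dia_any n a)"

definition dia_le :: "nat \<Rightarrow> nat \<Rightarrow> fm \<Rightarrow> fm" where
  "dia_le n m a = disj (map (\<lambda>i. dia_iter n i a) [0..<Suc m])"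

definition pretransitive :: "nat \<Rightarrow> fm set \<Rightarrow> bool" where
  "pretransitive n L \<longleftrightarrow> (\<exists>m. Imp (dia_iter n (Suc m) (Var 0)) (dia_le n m (Var 0)) \<in> L)"

definition L_consistent :: "fm set \<Rightarrow> fm set \<Rightarrow> bool" where
  "L_consistent L x \<longleftrightarrow> (\<forall>xs. set xs \<subseteq> x \<longrightarrow> Neg (conj xs) \<notin> L)"

definition MCS :: "nat \<Rightarrow> fm set \<Rightarrow> enat \<Rightarrow> fm set \<Rightarrow> bool" where
  "MCS n L k x \<longleftrightarrow> x \<subseteq> {a. kfm n k a} \<and> L_consistent L x
     \<and> (\<forall>y. x \<subseteq> y \<and> y \<subseteq> {a. kfm n k a} \<and> L_consistent L y \<longrightarrow> y = x)"

definition canW :: "nat \<Rightarrow> fm set \<Rightarrow> enat \<Rightarrow> fm set set" where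
  "canW n L k = {x. MCS n L k x}"

definition canRi :: "nat \<Rightarrow> fm set \<Rightarrow> enat \<Rightarrow> nat \<Rightarrow> (fm set \<times> fm set) set" where
  "canRi n L k i = {(x, y). x \<in> canW n L k \<and> y \<in> canW n L k
        \<and> (\<forall>\<psi>. kfm n k \<psi> \<longrightarrow> \<psi> \<in> y \<longrightarrow> Dia i \<psi> \<in> x)}"

definition canR :: "nat \<Rightarrow> fm set \<Rightarrow> enat \<Rightarrow> (fm set \<times> fm set) set" where
  "canR n L k = (\<Union>i<n. canRi n L k i)"

definition rstar :: "'a set \<Rightarrow> ('a \<times> 'a) set \<Rightarrow> ('a \<times> 'a) set" where
  "rstar V R = (R \<inter> (V \<times> V))\<^sup>* \<inter> (V \<times> V)"

definition cluster :: "'a set \<Rightarrow> ('a \<times> 'a) set \<Rightarrow> 'a \<Rightarrow> 'a set" where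
  "cluster V R a = {b \<in> V. (a, b) \<in> rstar V R \<and> (b, a) \<in> rstar V R}"

definition clusters :: "'a set \<Rightarrow> ('a \<times> 'a) set \<Rightarrow> 'a set set" where
  "clusters V R = cluster V R ` V"

definition skel_le :: "'a set \<Rightarrow> ('a \<times> 'a) set \<Rightarrow> 'a set \<Rightarrow> 'a set \<Rightarrow> bool" where
  "skel_le V R C D \<longleftrightarrow> (\<exists>a\<in>C. \<exists>b\<in>D. (a, b) \<in> rstar V R)"

definition skel_chain :: "'a set \<Rightarrow> ('a \<times> 'a) set \<Rightarrow> 'a set set \<Rightarrow> bool" where
  "skel_chain V R S \<longleftrightarrow> S \<subseteq> clusters V R
     \<and> (\<forall>C\<in>S. \<forall>D\<in>S. skel_le V R C D \<or> skel_le V R D C)"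

definition height :: "'a set \<Rightarrow> ('a \<times> 'a) set \<Rightarrow> enat" where
  "height V R = Sup {enat (card S) | S. finite S \<and> skel_chain V R S}"

definition depth :: "'a set \<Rightarrow> ('a \<times> 'a) set \<Rightarrow> 'a \<Rightarrow> enat" where
  "depth V R x = height (rstar V R `` {x}) R"

definition heavy :: "nat \<Rightarrow> 'a set \<Rightarrow> ('a \<times> 'a) set \<Rightarrow> bool" where
  "heavy h V R \<longleftrightarrow> (\<forall>x\<in>V. depth V R x > enat h \<longrightarrow>
       (\<exists>y. (x, y) \<in> rstar V R \<and> depth V R y = enat h))"

end

theory Submission imports Defs begin

lemma peval_Neg[simp]: "peval v (Neg a) = (\<not> peval v a)" by (simp add: Neg_def)
lemma peval_Or[simp]: "peval v (Or a b) = (peval v a \<or> peval v b)" by (auto simp add: Or_def)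
lemma peval_And[simp]: "peval v (And a b) = (peval v a \<and> peval v b)" by (auto simp add: And_def)
lemma peval_Top[simp]: "peval v Top" by (simp add: Top_def)
lemma peval_conj[simp]: "peval v (conj xs) = (\<forall>a\<in>set xs. peval v a)"
  by (induction xs) (auto simp: conj_def)
lemma peval_disj[simp]: "peval v (disj xs) = (\<exists>a\<in>set xs. peval v a)"
  by (induction xs) (auto simp: disj_def)

lemma kfm_simps[simp]:
  "kfm n k Bot"
  "kfm n k (Imp a b) = (kfm n k a \<and> kfm n k b)"
  "kfm n k (Box i a) = (i < n \<and> kfm n k a)"
  "kfm n k (Neg a) = kfm n k a"
  "kfm n k (Or a b) = (kfm n k a \<and> kfm n k b)"
  "kfm n k (And a b) = (kfm n k a \<and> kfm n k b)"
  "kfm n k Top"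
  "kfm n k (Dia i a) = (i < n \<and> kfm n k a)"
  by (auto simp: kfm_def Neg_def Or_def And_def Top_def Dia_def)

lemma kfm_conj[simp]: "kfm n k (conj xs) = (\<forall>a\<in>set xs. kfm n k a)"
  by (induction xs) (auto simp: conj_def)
lemma kfm_disj[simp]: "kfm n k (disj xs) = (\<forall>a\<in>set xs. kfm n k a)"
  by (induction xs) (auto simp: disj_def)
lemma kfm_dia_any[simp]: "kfm n k (dia_any n a) = (n = 0 \<or> kfm n k a)"
  by (auto simp: dia_any_def)
lemma kfm_dia_iter[simp]: "kfm n k a \<Longrightarrow> kfm n k (dia_iter n i a)"
  by (induction i arbitrary: a) auto
lemma kfm_dia_le[simp]: "kfm n k a \<Longrightarrow> kfm n k (dia_le n m a)"
  by (auto simp: dia_le_def)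
lemma kfm_nfm: "kfm n k a \<Longrightarrow> nfm n a" by (simp add: kfm_def)

lemma subst_simps[simp]:
  "subst s (Neg a) = Neg (subst s a)"
  "subst s (Or a b) = Or (subst s a) (subst s b)"
  "subst s (Dia i a) = Dia i (subst s a)"
  "subst s (disj xs) = disj (map (subst s) xs)"
  by (simp_all add: Neg_def Or_def Dia_def disj_def, induction xs, simp_all add: Or_def Neg_def)

lemma subst_dia_any[simp]: "subst s (dia_any n a) = dia_any n (subst s a)"
  by (simp add: dia_any_def comp_def)
lemma subst_dia_iter[simp]: "subst s (dia_iter n i a) = dia_iter n i (subst s a)"
  by (induction i arbitrary: a) auto
lemma subst_dia_le[simp]: "subst s (dia_le n m a) = dia_le n m (subst s a)"
  by (simp add: dia_le_def comp_def del: upt_Suc)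

lemma inj_Dia: "inj (Dia i)" by (auto simp: inj_def Dia_def Neg_def)

locale canon =
  fixes n :: nat and L :: "fm set" and k :: enat
  assumes normal: "normal_logic n L" and cons: "consistent_logic L"
begin

abbreviation "mcs x \<equiv> MCS n L k x"

lemma L_nfm: "a \<in> L \<Longrightarrow> nfm n a" using normal unfolding normal_logic_def by auto
lemma taut: "nfm n a \<Longrightarrow> tautology a \<Longrightarrow> a \<in> L" using normal unfolding normal_logic_def by auto
lemma mp: "a \<in> L \<Longrightarrow> Imp a b \<in> L \<Longrightarrow> b \<in> L" using normal unfolding normal_logic_def by blast
lemma nec: "i < n \<Longrightarrow> a \<in> L \<Longrightarrow> Box i a \<in> L" using normal unfolding normal_logic_def by blast

lemma Kax: assumes "i < n" "nfm n a" "nfm n b"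
  shows "Imp (Box i (Imp a b)) (Imp (Box i a) (Box i b)) \<in> L"
proof -
  define s where "s = (\<lambda>j. if j = 0 then a else if j = Suc 0 then b else Var j)"
  have "\<forall>j. nfm n (s j)" using assms by (auto simp: s_def)
  moreover have "Imp (Box i (Imp (Var 0) (Var 1))) (Imp (Box i (Var 0)) (Box i (Var 1))) \<in> L"
    using normal assms(1) unfolding normal_logic_def by blast
  ultimately have "subst s (Imp (Box i (Imp (Var 0) (Var 1))) (Imp (Box i (Var 0)) (Box i (Var 1)))) \<in> L"
    using normal unfolding normal_logic_def by blast
  then show ?thesis by (simp add: s_def)
qed

lemma taut_mp: assumes "a \<in> L" "nfm n b" "\<And>v. peval v a \<Longrightarrow> peval v b" shows "b \<in> L"
proof -
  have "Imp a b \<in> L" using assms L_nfm[OF assms(1)] by (intro taut) (auto simp: tautology_def)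
  with assms(1) mp show ?thesis by blast
qed

lemma taut_mp2: assumes "a \<in> L" "a' \<in> L" "nfm n b" "\<And>v. peval v a \<Longrightarrow> peval v a' \<Longrightarrow> peval v b"
  shows "b \<in> L"
proof -
  have "Imp a (Imp a' b) \<in> L" using assms L_nfm[OF assms(1)] L_nfm[OF assms(2)]
    by (intro taut) (auto simp: tautology_def)
  with assms(1,2) mp show ?thesis by blast
qed

lemma mcs_kfm: "mcs x \<Longrightarrow> a \<in> x \<Longrightarrow> kfm n k a" by (auto simp: MCS_def)

lemma mcs_incons: "mcs x \<Longrightarrow> set xs \<subseteq> x \<Longrightarrow> Neg (conj xs) \<in> L \<Longrightarrow> False"
  by (auto simp: MCS_def L_consistent_def)

lemma mcs_nfm_list: "mcs x \<Longrightarrow> set xs \<subseteq> x \<Longrightarrow> nfm n (Neg (conj xs))"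
proof -
  assume "mcs x" "set xs \<subseteq> x"
  then have "\<forall>a\<in>set xs. kfm n k a" using mcs_kfm by blast
  then have "kfm n k (Neg (conj xs))" by simp
  then show ?thesis by (rule kfm_nfm)
qed

lemma mcs_max: assumes "mcs x" "kfm n k a" "a \<notin> x"
  obtains ys where "set ys \<subseteq> insert a x" "Neg (conj ys) \<in> L"
proof -
  have "\<not> L_consistent L (insert a x)"
  proof
    assume "L_consistent L (insert a x)"
    then have "insert a x = x" using assms unfolding MCS_def by blast
    with assms(3) show False by blast
  qed
  then show ?thesis using that unfolding L_consistent_def by blast
qed

lemma mcs_neg: assumes x: "mcs x" and a: "kfm n k a" "a \<notin> x" shows "Neg a \<in> x"
proof (rule ccontr)
  assume na: "Neg a \<notin> x"
  obtain ys1 where y1: "set ys1 \<subseteq> insert a x" "Neg (conj ys1) \<in> L" using mcs_max[OF x a] .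
  have ka: "kfm n k (Neg a)" using a by simp
  obtain ys2 where y2: "set ys2 \<subseteq> insert (Neg a) x" "Neg (conj ys2) \<in> L"
    by (rule mcs_max[OF x ka na])
  define zs where "zs = filter (\<lambda>b. b \<in> x) (ys1 @ ys2)"
  have zx: "set zs \<subseteq> x" by (auto simp: zs_def)
  have "nfm n (Neg (conj zs))" by (rule mcs_nfm_list[OF x zx])
  moreover have "peval v (Neg (conj zs))" if "peval v (Neg (conj ys1))" "peval v (Neg (conj ys2))" for v
  proof (rule ccontr)
    assume "\<not> peval v (Neg (conj zs))"
    then have z: "\<forall>b\<in>set ys1 \<union> set ys2. b \<in> x \<longrightarrow> peval v b" by (simp add: zs_def)
    from that(1) obtain b1 where b1: "b1 \<in> set ys1" "\<not> peval v b1" by auto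
    then have "b1 \<notin> x" using z by blast
    then have "b1 = a" using b1(1) y1(1) by blast
    then have "\<not> peval v a" using b1 by simp
    from that(2) obtain b2 where b2: "b2 \<in> set ys2" "\<not> peval v b2" by auto
    then have "b2 \<notin> x" using z by blast
    then have "b2 = Neg a" using b2(1) y2(1) by blast
    then have "peval v a" using b2 by simp
    with \<open>\<not> peval v a\<close> show False by simp
  qed
  ultimately have "Neg (conj zs) \<in> L" using taut_mp2[OF y1(2) y2(2)] by blast
  then show False using mcs_incons[OF x zx] by blast
qed

lemma mcs_derive: assumes x: "mcs x" and xs: "set xs \<subseteq> x" and b: "b \<in> L" and a: "kfm n k a"
  and imp: "\<And>v. peval v b \<Longrightarrow> (\<forall>c\<in>set xs. peval v c) \<Longrightarrow> peval v a"
  shows "a \<in> x"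
proof (rule ccontr)
  assume "a \<notin> x"
  then have na: "Neg a \<in> x" using mcs_neg[OF x a] by blast
  have "set (Neg a # xs) \<subseteq> x" using xs na by simp
  have "nfm n (Neg (conj (Neg a # xs)))" by (rule mcs_nfm_list[OF x \<open>set (Neg a # xs) \<subseteq> x\<close>])
  then have "Neg (conj (Neg a # xs)) \<in> L" using imp by (intro taut_mp[OF b]) auto
  then show False using mcs_incons[OF x, of "Neg a # xs"] xs na by auto
qed

lemma mcs_taut: assumes x: "mcs x" and xs: "set xs \<subseteq> x" and a: "kfm n k a"
  and imp: "\<And>v. (\<forall>c\<in>set xs. peval v c) \<Longrightarrow> peval v a"
  shows "a \<in> x"
proof -
  have "Top \<in> L" by (rule taut) (auto simp: tautology_def Top_def Neg_def)
  then show ?thesis using mcs_derive[OF x xs _ a] imp by blast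
qed

lemma mcs_L: "mcs x \<Longrightarrow> a \<in> L \<Longrightarrow> kfm n k a \<Longrightarrow> a \<in> x"
  using mcs_derive[of x "[]" a a] by auto

lemma mcs_not_both: "mcs x \<Longrightarrow> a \<in> x \<Longrightarrow> Neg a \<in> x \<Longrightarrow> False"
proof -
  assume x: "mcs x" and "a \<in> x" "Neg a \<in> x"
  moreover have "Neg (conj [a, Neg a]) \<in> L" using mcs_kfm[OF x \<open>a \<in> x\<close>]
    by (intro taut) (auto simp: tautology_def kfm_def conj_def And_def Neg_def Top_def)
  ultimately show False using mcs_incons[OF x, of "[a, Neg a]"] by auto
qed

lemma mcs_disjE: assumes x: "mcs x" and d: "disj xs \<in> x" shows "\<exists>a\<in>set xs. a \<in> x"
proof (rule ccontr)
  assume nt: "\<not> ?thesis"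
  have kx: "\<forall>a\<in>set xs. kfm n k a" using mcs_kfm[OF x d] by simp
  have nx: "set (map Neg xs) \<subseteq> x" using nt kx mcs_neg[OF x] by auto
  have "Neg (disj xs) \<in> x"
    by (rule mcs_taut[OF x nx]) (use kx in auto)
  then show False using mcs_not_both[OF x d] by blast
qed

lemma mcs_disjI: assumes x: "mcs x" "a \<in> x" "a \<in> set xs" "\<forall>b\<in>set xs. kfm n k b"
  shows "disj xs \<in> x"
  using assms by (intro mcs_taut[OF x(1), of "[a]"]) auto

lemma mcs_conjI: assumes x: "mcs x" "set xs \<subseteq> x" shows "conj xs \<in> x"
  using assms mcs_kfm[OF x(1)] by (intro mcs_taut[OF x(1), of xs]) auto

lemma mcs_conjE: assumes x: "mcs x" "conj xs \<in> x" "a \<in> set xs" shows "a \<in> x"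
  using assms mcs_kfm[OF x(1) x(2)] by (intro mcs_taut[OF x(1), of "[conj xs]"]) auto


lemma lindenbaum: assumes c: "L_consistent L G" and g: "G \<subseteq> {a. kfm n k a}"
  shows "\<exists>x. mcs x \<and> G \<subseteq> x"
proof -
  define A where "A = {y. G \<subseteq> y \<and> y \<subseteq> {a. kfm n k a} \<and> L_consistent L y}"
  have "\<exists>U\<in>A. \<forall>X\<in>C. X \<subseteq> U" if C: "C \<in> chains A" for C
  proof (cases "C = {}")
    case True then show ?thesis using c g by (auto simp: A_def)
  next
    case False
    have CA: "C \<subseteq> A" using C by (simp add: chains_def)
    have ch: "subset.chain A C" using C by (simp add: chains_alt_def)
    have "L_consistent L (\<Union>C)"
      unfolding L_consistent_def
    proof (intro allI impI)
      fix xs assume "set xs \<subseteq> \<Union>C"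
      then obtain B where "B \<in> C" "set xs \<subseteq> B"
        using finite_subset_Union_chain[OF _ _ False ch] by blast
      then show "Neg (conj xs) \<notin> L" using CA by (auto simp: A_def L_consistent_def)
    qed
    moreover have "G \<subseteq> \<Union>C" "\<Union>C \<subseteq> {a. kfm n k a}" using False CA by (auto simp: A_def)
    ultimately show ?thesis by (intro bexI[of _ "\<Union>C"]) (auto simp: A_def)
  qed
  then obtain M where M: "M \<in> A" "\<forall>X\<in>A. M \<subseteq> X \<longrightarrow> X = M"
    using Zorn_Lemma2[of A] by blast
  have "mcs M" unfolding MCS_def
  proof (intro conjI allI impI)
    show "M \<subseteq> {a. kfm n k a}" "L_consistent L M" using M(1) by (auto simp: A_def)
    fix y assume "M \<subseteq> y \<and> y \<subseteq> {a. kfm n k a} \<and> L_consistent L y"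
    then show "y = M" using M by (auto simp: A_def)
  qed
  then show ?thesis using M(1) by (auto simp: A_def)
qed

lemma box_mp: assumes x: "mcs x" and i: "i < n" and "Box i (Imp a b) \<in> x" "Box i a \<in> x"
  shows "Box i b \<in> x"
proof -
  have ka: "kfm n k (Box i (Imp a b))" using mcs_kfm[OF x assms(3)] .
  have K: "Imp (Box i (Imp a b)) (Imp (Box i a) (Box i b)) \<in> L"
    using Kax[OF i] ka by (simp add: kfm_def)
  show ?thesis
    by (rule mcs_derive[OF x _ K, of "[Box i (Imp a b), Box i a]"]) (use assms ka in auto)
qed

lemma box_L: assumes x: "mcs x" and i: "i < n" and "a \<in> L" "kfm n k a" shows "Box i a \<in> x"
  using assms by (intro mcs_L[OF x] nec) auto

lemma box_mono: assumes x: "mcs x" and i: "i < n" and "Box i a \<in> x" "Imp a b \<in> L" "kfm n k b"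
  shows "Box i b \<in> x"
proof -
  have ka: "kfm n k a" using mcs_kfm[OF x assms(3)] by simp
  have "Box i (Imp a b) \<in> x" by (rule box_L[OF x i assms(4)]) (use assms ka in auto)
  then show ?thesis using box_mp[OF x i] assms(3) by blast
qed

lemma box_conj: assumes x: "mcs x" and i: "i < n" and "\<forall>a\<in>set as. Box i a \<in> x"
  shows "Box i (conj as) \<in> x"
  using assms(3)
proof (induction as)
  case Nil
  have "Top \<in> L" by (rule taut) (auto simp: tautology_def Top_def Neg_def)
  then have "Box i Top \<in> x" by (rule box_L[OF x i]) simp
  then show ?case by (simp add: conj_def)
next
  case (Cons a as)
  have ka: "kfm n k a" using mcs_kfm[OF x, of "Box i a"] Cons.prems by simp
  have kc: "kfm n k (conj as)" using mcs_kfm[OF x, of "Box i (conj as)"] Cons by simp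
  have "kfm n k (Imp a (Imp (conj as) (And a (conj as))))" using ka kc by simp
  then have T: "Imp a (Imp (conj as) (And a (conj as))) \<in> L"
    by (rule taut[OF kfm_nfm]) (simp add: tautology_def)
  have "Box i (Imp (conj as) (And a (conj as))) \<in> x"
    by (rule box_mono[OF x i _ T]) (use Cons.prems ka kc in auto)
  moreover have "Box i (conj as) \<in> x" using Cons by simp
  ultimately have "Box i (And a (conj as)) \<in> x" by (rule box_mp[OF x i])
  then show ?case by (simp add: conj_def)
qed

lemma canRi_iff: "(x, y) \<in> canRi n L k i \<longleftrightarrow> mcs x \<and> mcs y \<and> (\<forall>\<psi>. kfm n k \<psi> \<longrightarrow> \<psi> \<in> y \<longrightarrow> Dia i \<psi> \<in> x)"
  by (simp add: canRi_def canW_def)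

lemma canR_iff: "(x, y) \<in> canR n L k \<longleftrightarrow> (\<exists>i<n. (x, y) \<in> canRi n L k i)"
  by (auto simp: canR_def)

lemma existence: assumes x: "mcs x" and i: "i < n" and d: "Dia i \<psi> \<in> x"
  shows "\<exists>z. (x, z) \<in> canRi n L k i \<and> \<psi> \<in> z"
proof -
  have kp: "kfm n k \<psi>" using mcs_kfm[OF x d] by simp
  define D where "D = insert \<psi> {\<phi>. kfm n k \<phi> \<and> Box i \<phi> \<in> x}"
  have "L_consistent L D" unfolding L_consistent_def
  proof (intro allI impI notI)
    fix xs assume xs: "set xs \<subseteq> D" and nc: "Neg (conj xs) \<in> L"
    define ps where "ps = filter (\<lambda>a. a \<noteq> \<psi>) xs"
    have ps: "\<forall>a\<in>set ps. Box i a \<in> x \<and> kfm n k a" using xs by (auto simp: ps_def D_def)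
    have kx: "\<forall>a\<in>set xs. kfm n k a" using xs kp by (auto simp: D_def)
    have I: "Imp (conj ps) (Neg \<psi>) \<in> L"
    proof (rule taut_mp[OF nc])
      show "nfm n (Imp (conj ps) (Neg \<psi>))" using ps kp by (intro kfm_nfm[where k=k]) simp
      fix v assume "peval v (Neg (conj xs))"
      then show "peval v (Imp (conj ps) (Neg \<psi>))" by (auto simp: ps_def)
    qed
    have B: "Box i (conj ps) \<in> x" by (rule box_conj[OF x i]) (use ps in auto)
    have "Box i (Neg \<psi>) \<in> x" by (rule box_mono[OF x i B I]) (use kp in simp)
    moreover have "Neg (Box i (Neg \<psi>)) \<in> x" using d by (simp add: Dia_def)
    ultimately show False using mcs_not_both[OF x] by blast
  qed
  moreover have "D \<subseteq> {a. kfm n k a}" using kp by (auto simp: D_def)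
  ultimately obtain z where z: "mcs z" "D \<subseteq> z" using lindenbaum by blast
  have "Dia i \<phi> \<in> x" if "kfm n k \<phi>" "\<phi> \<in> z" for \<phi>
  proof (rule ccontr)
    assume "Dia i \<phi> \<notin> x"
    then have nd: "Neg (Dia i \<phi>) \<in> x" using mcs_neg[OF x] that i by simp
    have "Box i (Neg \<phi>) \<in> x"
      by (rule mcs_taut[OF x, of "[Neg (Dia i \<phi>)]"]) (use nd that i in \<open>auto simp: Dia_def\<close>)
    then have "Neg \<phi> \<in> z" using z that by (auto simp: D_def)
    then show False using mcs_not_both[OF z(1) that(2)] by blast
  qed
  then show ?thesis using x z D_def by (auto simp: canRi_iff)
qed


abbreviation "R \<equiv> canR n L k"

lemma R_mcs: "(x, y) \<in> R \<Longrightarrow> mcs x \<and> mcs y"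
  by (auto simp: canR_iff canRi_iff)

lemma Rpow_mcs: "(x, y) \<in> R ^^ i \<Longrightarrow> mcs x \<Longrightarrow> mcs y"
  by (induction i arbitrary: y) (auto dest: R_mcs)

lemma Rstar_mcs: "(x, y) \<in> R\<^sup>* \<Longrightarrow> mcs x \<Longrightarrow> mcs y"
  by (induction rule: rtrancl_induct) (auto dest: R_mcs)

lemma dia_any_in: assumes u: "mcs u" and j: "j < n" and d: "Dia j \<psi> \<in> u"
  shows "dia_any n \<psi> \<in> u"
proof -
  have kp: "kfm n k \<psi>" using mcs_kfm[OF u d] by simp
  show ?thesis unfolding dia_any_def
    by (rule mcs_disjI[OF u d]) (use j kp in auto)
qed

lemma dia_any_out: assumes u: "mcs u" and d: "dia_any n \<psi> \<in> u"
  shows "\<exists>j<n. Dia j \<psi> \<in> u"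
  using mcs_disjE[OF u d[unfolded dia_any_def]] by auto

lemma claimA': "(y, z) \<in> R ^^ i \<Longrightarrow> mcs z \<Longrightarrow> \<psi> \<in> z \<Longrightarrow> dia_iter n i \<psi> \<in> y"
proof (induction i arbitrary: z \<psi>)
  case 0 then show ?case by simp
next
  case (Suc i)
  from Suc.prems(1) obtain u where yu: "(y, u) \<in> R ^^ i" and uz: "(u, z) \<in> R"
    by (rule relpow_Suc_E)
  obtain j where j: "j < n" "(u, z) \<in> canRi n L k j" using uz canR_iff by blast
  have kp: "kfm n k \<psi>" using mcs_kfm[OF Suc.prems(2,3)] .
  have u: "mcs u" using R_mcs[OF uz] by blast
  have "Dia j \<psi> \<in> u" using j kp Suc.prems(3) by (auto simp: canRi_iff)
  then have "dia_any n \<psi> \<in> u" by (rule dia_any_in[OF u j(1)])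
  then have "dia_iter n i (dia_any n \<psi>) \<in> y" using Suc.IH[OF yu u] by blast
  then show ?case by simp
qed

lemma claimB': "mcs y \<Longrightarrow> dia_iter n i \<psi> \<in> y \<Longrightarrow> \<exists>z. (y, z) \<in> R ^^ i \<and> \<psi> \<in> z"
proof (induction i arbitrary: \<psi>)
  case 0 then show ?case by (intro exI[of _ y]) simp
next
  case (Suc i)
  have "dia_iter n i (dia_any n \<psi>) \<in> y" using Suc.prems(2) by simp
  then have "\<exists>u. (y, u) \<in> R ^^ i \<and> dia_any n \<psi> \<in> u" by (rule Suc.IH[OF Suc.prems(1)])
  then obtain u where yu: "(y, u) \<in> R ^^ i" and du: "dia_any n \<psi> \<in> u" by (elim exE conjE)
  have u: "mcs u" using Rpow_mcs[OF yu Suc.prems(1)] .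
  obtain j where j: "j < n" "Dia j \<psi> \<in> u" using dia_any_out[OF u du] by blast
  obtain z where z: "(u, z) \<in> canRi n L k j" "\<psi> \<in> z" using existence[OF u j(1) j(2)] by blast
  have "(u, z) \<in> R" using z(1) j(1) canR_iff by blast
  then have "(y, z) \<in> R ^^ Suc i" by (rule relpow_Suc_I[OF yu])
  then show ?case using z(2) by blast
qed

end

locale canon_pt = canon +
  fixes m :: nat
  assumes pt: "Imp (dia_iter n (Suc m) (Var 0)) (dia_le n m (Var 0)) \<in> L"
begin

lemma dle_in: "mcs y \<Longrightarrow> kfm n k \<psi> \<Longrightarrow> i \<le> m \<Longrightarrow> dia_iter n i \<psi> \<in> y \<Longrightarrow> dia_le n m \<psi> \<in> y"
proof -
  assume a: "mcs y" "kfm n k \<psi>" "i \<le> m" "dia_iter n i \<psi> \<in> y"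
  have "dia_iter n i \<psi> \<in> set (map (\<lambda>i. dia_iter n i \<psi>) [0..<Suc m])"
    using a(3) by (auto simp del: upt_Suc)
  then show ?thesis unfolding dia_le_def
    by (rule mcs_disjI[OF a(1) a(4)]) (use a(2) in \<open>auto simp del: upt_Suc\<close>)
qed


lemma dle_out: assumes y: "mcs y" and d: "dia_le n m \<psi> \<in> y"
  shows "\<exists>i\<le>m. dia_iter n i \<psi> \<in> y"
proof -
  obtain a where "a \<in> set (map (\<lambda>i. dia_iter n i \<psi>) [0..<Suc m])" "a \<in> y"
    using mcs_disjE[OF y d[unfolded dia_le_def]] by blast
  then show ?thesis by (auto simp del: upt_Suc simp: less_Suc_eq_le)
qed

lemma pt_inst: assumes y: "mcs y" and kp: "kfm n k \<psi>" and d: "dia_iter n (Suc m) \<psi> \<in> y"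
  shows "dia_le n m \<psi> \<in> y"
proof -
  define s where "s = (\<lambda>j. if j = 0 then \<psi> else Var j)"
  have sn: "\<forall>j. nfm n (s j)" using kfm_nfm[OF kp] by (simp add: s_def)
  have sub: "\<forall>s a. a \<in> L \<longrightarrow> (\<forall>j. nfm n (s j)) \<longrightarrow> subst s a \<in> L"
    using normal unfolding normal_logic_def by blast
  have "subst s (Imp (dia_iter n (Suc m) (Var 0)) (dia_le n m (Var 0))) \<in> L"
    using sub pt sn by blast
  then have I: "Imp (dia_iter n (Suc m) \<psi>) (dia_le n m \<psi>) \<in> L"
    by (simp add: s_def del: dia_iter.simps)
  show ?thesis
    by (rule mcs_derive[OF y _ I, of "[dia_iter n (Suc m) \<psi>]"]) (use d kp in auto)
qed

lemma claimA: "(y, z) \<in> R\<^sup>* \<Longrightarrow> mcs y \<Longrightarrow> \<psi> \<in> z \<Longrightarrow> \<exists>i\<le>m. dia_iter n i \<psi> \<in> y"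
proof (induction arbitrary: \<psi> rule: rtrancl_induct)
  case base
  then show ?case by (intro exI[of _ 0]) simp
next
  case (step u z)
  obtain j where j: "j < n" "(u, z) \<in> canRi n L k j" using step.hyps(2) canR_iff by blast
  have u: "mcs u" and z: "mcs z" using R_mcs[OF step.hyps(2)] by auto
  have kp: "kfm n k \<psi>" using mcs_kfm[OF z step.prems(2)] .
  have "Dia j \<psi> \<in> u" using j kp step.prems(2) by (auto simp: canRi_iff)
  then have "dia_any n \<psi> \<in> u" by (rule dia_any_in[OF u j(1)])
  then obtain i where i: "i \<le> m" "dia_iter n i (dia_any n \<psi>) \<in> y"
    using step.IH[OF step.prems(1)] by blast
  then have di: "dia_iter n (Suc i) \<psi> \<in> y" by simp
  show ?case
  proof (cases "Suc i \<le> m")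
    case True then show ?thesis using di by blast
  next
    case False
    then have "i = m" using i by simp
    then have "dia_le n m \<psi> \<in> y" using pt_inst[OF step.prems(1) kp] di by simp
    then show ?thesis by (rule dle_out[OF step.prems(1)])
  qed
qed

lemma dle_down: assumes ab: "(a, b) \<in> R\<^sup>*" and a: "mcs a" and b: "mcs b" and kp: "kfm n k \<psi>"
  and d: "dia_le n m \<psi> \<in> b" shows "dia_le n m \<psi> \<in> a"
proof -
  obtain i where i: "i \<le> m" "dia_iter n i \<psi> \<in> b" using dle_out[OF b d] by blast
  obtain z where z: "(b, z) \<in> R ^^ i" "\<psi> \<in> z" using claimB'[OF b i(2)] by blast
  have "(a, z) \<in> R\<^sup>*" using ab z(1) relpow_imp_rtrancl by (metis rtrancl_trans)
  then obtain i' where "i' \<le> m" "dia_iter n i' \<psi> \<in> a" using claimA[OF _ a z(2)] by blast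
  then show ?thesis using dle_in[OF a kp] by blast
qed


lemma P_i: "mcs y \<Longrightarrow> mcs w \<Longrightarrow> (\<forall>\<phi>. kfm n k \<phi> \<longrightarrow> \<phi> \<in> w \<longrightarrow> dia_iter n i \<phi> \<in> y) \<Longrightarrow> (y, w) \<in> R ^^ i"
proof (induction i arbitrary: w)
  case 0
  have wy: "w \<subseteq> y" using 0(3) mcs_kfm[OF 0(2)] by auto
  from 0(2) have max: "\<forall>y'. w \<subseteq> y' \<and> y' \<subseteq> {a. kfm n k a} \<and> L_consistent L y' \<longrightarrow> y' = w"
    unfolding MCS_def by blast
  from 0(1) have "y \<subseteq> {a. kfm n k a} \<and> L_consistent L y" unfolding MCS_def by blast
  then have "y = w" using max wy by blast
  then show ?case by simp
next
  case (Suc i)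
  define G where "G j = {Dia j \<psi> | \<psi>. \<psi> \<in> w} \<union> {Neg \<phi> | \<phi>. kfm n k \<phi> \<and> dia_iter n i \<phi> \<notin> y}" for j
  have "\<exists>j<n. L_consistent L (G j)"
  proof (rule ccontr)
    assume "\<not> (\<exists>j<n. L_consistent L (G j))"
    then have "\<forall>j\<in>{..<n}. \<exists>xs. set xs \<subseteq> G j \<and> Neg (conj xs) \<in> L" unfolding L_consistent_def by blast
    from bchoice[OF this] obtain f where f: "\<forall>j\<in>{..<n}. set (f j) \<subseteq> G j \<and> Neg (conj (f j)) \<in> L"
      by blast
    define P where "P = (\<Union>j<n. {\<psi>. \<psi> \<in> w \<and> Dia j \<psi> \<in> set (f j)})"
    have "\<And>j. finite {\<psi>. \<psi> \<in> w \<and> Dia j \<psi> \<in> set (f j)}"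
      by (rule finite_subset[OF _ finite_vimageI[OF List.finite_set inj_Dia]]) auto
    then have fin: "finite P" unfolding P_def by (intro finite_UN_I) auto
    obtain ps where ps: "set ps = P" using finite_list[OF fin] by blast
    have Pw: "P \<subseteq> w" by (auto simp: P_def)
    have cw: "conj ps \<in> w" using mcs_conjI[OF Suc.prems(2)] ps Pw by auto
    have kc: "kfm n k (conj ps)" using mcs_kfm[OF Suc.prems(2) cw] .
    have "dia_iter n (Suc i) (conj ps) \<in> y" using Suc.prems(3) kc cw by blast
    then have "dia_iter n i (dia_any n (conj ps)) \<in> y" by simp
    then have "\<exists>u. (y, u) \<in> R ^^ i \<and> dia_any n (conj ps) \<in> u" by (rule claimB'[OF Suc.prems(1)])
    then obtain u where yu: "(y, u) \<in> R ^^ i" and du: "dia_any n (conj ps) \<in> u" by (elim exE conjE)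
    have u: "mcs u" using Rpow_mcs[OF yu Suc.prems(1)] .
    obtain j where j: "j < n" "Dia j (conj ps) \<in> u" using dia_any_out[OF u du] by blast
    obtain v where v: "(u, v) \<in> canRi n L k j" "conj ps \<in> v" using existence[OF u j(1) j(2)] by blast
    have vm: "mcs v" using v(1) canRi_iff by blast
    have "set (f j) \<subseteq> u"
    proof
      fix e assume e: "e \<in> set (f j)"
      then have "e \<in> G j" using f j(1) by blast
      then consider (a) \<psi> where "e = Dia j \<psi>" "\<psi> \<in> w"
        | (b) \<phi> where "e = Neg \<phi>" "kfm n k \<phi>" "dia_iter n i \<phi> \<notin> y"
        unfolding G_def by blast
      then show "e \<in> u"
      proof cases
        case a
        then have "\<psi> \<in> P" using e j(1) unfolding P_def by blast
        then have "\<psi> \<in> v" using mcs_conjE[OF vm v(2)] ps by blast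
        moreover have "kfm n k \<psi>" using mcs_kfm[OF Suc.prems(2) a(2)] .
        ultimately show ?thesis using v(1) a(1) by (auto simp: canRi_iff)
      next
        case b
        have "\<phi> \<notin> u" using claimA'[OF yu u] b(3) by blast
        then show ?thesis using mcs_neg[OF u b(2)] b(1) by simp
      qed
    qed
    then show False using mcs_incons[OF u] f j(1) by blast
  qed
  then obtain j where j: "j < n" "L_consistent L (G j)" by blast
  have "G j \<subseteq> {a. kfm n k a}" using j(1) mcs_kfm[OF Suc.prems(2)] by (auto simp: G_def)
  then obtain u where u: "mcs u" "G j \<subseteq> u" using lindenbaum[OF j(2)] by blast
  have "\<forall>\<phi>. kfm n k \<phi> \<longrightarrow> \<phi> \<in> u \<longrightarrow> dia_iter n i \<phi> \<in> y"
  proof (intro allI impI)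
    fix \<phi> assume kp: "kfm n k \<phi>" and pu: "\<phi> \<in> u"
    show "dia_iter n i \<phi> \<in> y"
    proof (rule ccontr)
      assume "dia_iter n i \<phi> \<notin> y"
      then have "Neg \<phi> \<in> u" using u(2) kp by (auto simp: G_def)
      then show False using mcs_not_both[OF u(1) pu] by blast
    qed
  qed
  then have yu: "(y, u) \<in> R ^^ i" using Suc.IH[OF Suc.prems(1) u(1)] by blast
  have "(u, w) \<in> canRi n L k j" using u Suc.prems(2) by (auto simp: canRi_iff G_def)
  then have "(u, w) \<in> R" using j(1) canR_iff by blast
  then show ?case by (rule relpow_Suc_I[OF yu])
qed

lemma P_star: assumes y: "mcs y" and w: "mcs w"
  and h: "\<forall>\<psi>. kfm n k \<psi> \<longrightarrow> \<psi> \<in> w \<longrightarrow> dia_le n m \<psi> \<in> y"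
  shows "(y, w) \<in> R\<^sup>*"
proof -
  have "\<exists>i. \<forall>\<psi>. kfm n k \<psi> \<longrightarrow> \<psi> \<in> w \<longrightarrow> dia_iter n i \<psi> \<in> y"
  proof (rule ccontr)
    assume "\<not> ?thesis"
    then have "\<forall>i. \<exists>\<psi>. kfm n k \<psi> \<and> \<psi> \<in> w \<and> dia_iter n i \<psi> \<notin> y" by blast
    then obtain g where g: "\<forall>i. kfm n k (g i) \<and> g i \<in> w \<and> dia_iter n i (g i) \<notin> y" by metis
    define c where "c = conj (map g [0..<Suc m])"
    have cw: "c \<in> w" unfolding c_def using g by (intro mcs_conjI[OF w]) auto
    have kc: "kfm n k c" using mcs_kfm[OF w cw] .
    obtain i where i: "i \<le> m" "dia_iter n i c \<in> y" using dle_out[OF y] h kc cw by blast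
    obtain z where z: "(y, z) \<in> R ^^ i" "c \<in> z" using claimB'[OF y i(2)] by blast
    have zm: "mcs z" using Rpow_mcs[OF z(1) y] .
    have "g i \<in> set (map g [0..<Suc m])" using i(1) by (auto simp del: upt_Suc simp: less_Suc_eq_le)
    then have "g i \<in> z" using mcs_conjE[OF zm z(2)[unfolded c_def]] by blast
    then have "dia_iter n i (g i) \<in> y" using claimA'[OF z(1) zm] by blast
    then show False using g by blast
  qed
  then obtain i where "\<forall>\<psi>. kfm n k \<psi> \<longrightarrow> \<psi> \<in> w \<longrightarrow> dia_iter n i \<psi> \<in> y" by blast
  then have "(y, w) \<in> R ^^ i" by (rule P_i[OF y w])
  then show ?thesis by (rule relpow_imp_rtrancl)
qed


lemma chain_bound: assumes C: "C \<noteq> {}" "\<forall>c\<in>C. mcs c" "\<forall>a\<in>C. \<forall>b\<in>C. (a, b) \<in> R\<^sup>* \<or> (b, a) \<in> R\<^sup>*"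
  shows "\<exists>w. mcs w \<and> (\<forall>c\<in>C. (c, w) \<in> R\<^sup>*)"
proof -
  define G where "G = {Neg \<psi> | \<psi>. kfm n k \<psi> \<and> (\<exists>c\<in>C. dia_le n m \<psi> \<notin> c)}"
  define Gt where "Gt t = {Neg \<psi> | \<psi>. kfm n k \<psi> \<and> dia_le n m \<psi> \<notin> t}" for t
  have Gt_sub: "Gt t \<subseteq> t" if t: "t \<in> C" for t
  proof
    fix e assume "e \<in> Gt t"
    then obtain \<psi> where e: "e = Neg \<psi>" "kfm n k \<psi>" "dia_le n m \<psi> \<notin> t" by (auto simp: Gt_def)
    have tm: "mcs t" using C(2) t by blast
    have "\<psi> \<notin> t" using dle_in[OF tm e(2), of 0] e(3) by auto
    then show "e \<in> t" using mcs_neg[OF tm e(2)] e(1) by simp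
  qed
  have key: "set xs \<subseteq> G \<Longrightarrow> \<exists>t\<in>C. set xs \<subseteq> Gt t" for xs
  proof (induction xs)
    case Nil then show ?case using C(1) by auto
  next
    case (Cons e xs)
    then obtain t where t: "t \<in> C" "set xs \<subseteq> Gt t" by auto
    from Cons.prems obtain \<psi> c where e: "e = Neg \<psi>" "kfm n k \<psi>" "c \<in> C" "dia_le n m \<psi> \<notin> c"
      by (auto simp: G_def)
    have tm: "mcs t" and cm: "mcs c" using C(2) t(1) e(3) by auto
    show ?case
    proof (cases "(c, t) \<in> R\<^sup>*")
      case True
      have "dia_le n m \<psi> \<notin> t" using dle_down[OF True cm tm e(2)] e(4) by blast
      then have "e \<in> Gt t" using e(1,2) by (auto simp: Gt_def)
      then show ?thesis using t by auto
    next
      case False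
      then have tc: "(t, c) \<in> R\<^sup>*" using C(3) t(1) e(3) by blast
      have "set xs \<subseteq> Gt c"
      proof
        fix e' assume "e' \<in> set xs"
        then obtain \<psi>' where e': "e' = Neg \<psi>'" "kfm n k \<psi>'" "dia_le n m \<psi>' \<notin> t"
          using t(2) by (auto simp: Gt_def)
        have "dia_le n m \<psi>' \<notin> c" using dle_down[OF tc tm cm e'(2)] e'(3) by blast
        then show "e' \<in> Gt c" using e'(1,2) by (auto simp: Gt_def)
      qed
      moreover have "e \<in> Gt c" using e by (auto simp: Gt_def)
      ultimately show ?thesis using e(3) by auto
    qed
  qed
  have "L_consistent L G" unfolding L_consistent_def
  proof (intro allI impI notI)
    fix xs assume xs: "set xs \<subseteq> G" "Neg (conj xs) \<in> L"
    obtain t where t: "t \<in> C" "set xs \<subseteq> Gt t" using key[OF xs(1)] by blast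
    have "set xs \<subseteq> t" using t Gt_sub by blast
    then show False using mcs_incons[of t xs] C(2) t(1) xs(2) by blast
  qed
  moreover have "G \<subseteq> {a. kfm n k a}" by (auto simp: G_def)
  ultimately obtain w where w: "mcs w" "G \<subseteq> w" using lindenbaum by blast
  have "(c, w) \<in> R\<^sup>*" if c: "c \<in> C" for c
  proof (rule P_star)
    show "mcs c" using C(2) c by blast
    show "mcs w" by (rule w(1))
    show "\<forall>\<psi>. kfm n k \<psi> \<longrightarrow> \<psi> \<in> w \<longrightarrow> dia_le n m \<psi> \<in> c"
    proof (intro allI impI)
      fix \<psi> assume kp: "kfm n k \<psi>" and pw: "\<psi> \<in> w"
      show "dia_le n m \<psi> \<in> c"
      proof (rule ccontr)
        assume "dia_le n m \<psi> \<notin> c"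
        then have "Neg \<psi> \<in> w" using w(2) kp c by (auto simp: G_def)
        then show False using mcs_not_both[OF w(1) pw] by blast
      qed
    qed
  qed
  then show ?thesis using w(1) by blast
qed


end
context canon_pt begin
lemma final_point: assumes x: "mcs x"
  shows "\<exists>y. (x, y) \<in> R\<^sup>* \<and> (\<forall>z. (y, z) \<in> R\<^sup>* \<longrightarrow> (z, y) \<in> R\<^sup>*)"
proof -
  define S where "S y = {v. mcs v} - R\<^sup>* `` {y}" for y
  have S_sub: "S y \<subseteq> S y' \<longleftrightarrow> (y, y') \<in> R\<^sup>*" if y': "mcs y'" for y y'
  proof
    assume "S y \<subseteq> S y'"
    moreover have "y' \<notin> S y'" by (simp add: S_def)
    ultimately have "y' \<notin> S y" by blast
    then show "(y, y') \<in> R\<^sup>*" using y' by (simp add: S_def)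
  next
    assume yy: "(y, y') \<in> R\<^sup>*"
    show "S y \<subseteq> S y'"
    proof
      fix v assume "v \<in> S y"
      then have v: "mcs v" "(y, v) \<notin> R\<^sup>*" by (auto simp: S_def)
      have "(y', v) \<notin> R\<^sup>*" using rtrancl_trans[OF yy] v(2) by blast
      then show "v \<in> S y'" using v(1) by (simp add: S_def)
    qed
  qed
  define A where "A = {S y | y. (x, y) \<in> R\<^sup>*}"
  have "\<exists>U\<in>A. \<forall>X\<in>C. X \<subseteq> U" if C: "C \<in> chains A" for C
  proof (cases "C = {}")
    case True
    have "S x \<in> A" unfolding A_def by blast
    then show ?thesis using True by blast
  next
    case False
    have CA: "C \<subseteq> A" and ch: "\<forall>X\<in>C. \<forall>Y\<in>C. X \<subseteq> Y \<or> Y \<subseteq> X"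
      using C by (auto simp: chains_def chain_subset_def)
    define P where "P = {y. (x, y) \<in> R\<^sup>* \<and> S y \<in> C}"
    have Pm: "\<forall>p\<in>P. mcs p" using Rstar_mcs[OF _ x] by (auto simp: P_def)
    obtain X0 where X0: "X0 \<in> C" using False by blast
    then obtain y0 where y0: "X0 = S y0" "(x, y0) \<in> R\<^sup>*" using CA unfolding A_def by blast
    have "y0 \<in> P" using y0 X0 unfolding P_def by blast
    then have "P \<noteq> {}" by blast
    moreover have "\<forall>a\<in>P. \<forall>b\<in>P. (a, b) \<in> R\<^sup>* \<or> (b, a) \<in> R\<^sup>*"
    proof (intro ballI)
      fix a b assume "a \<in> P" "b \<in> P"
      then have "S a \<subseteq> S b \<or> S b \<subseteq> S a" using ch by (auto simp: P_def)
      moreover have "mcs a" "mcs b" using Pm \<open>a \<in> P\<close> \<open>b \<in> P\<close> by auto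
      ultimately show "(a, b) \<in> R\<^sup>* \<or> (b, a) \<in> R\<^sup>*" using S_sub[of b a] S_sub[of a b] by blast
    qed
    ultimately have "\<exists>w. mcs w \<and> (\<forall>c\<in>P. (c, w) \<in> R\<^sup>*)" using chain_bound Pm by blast
    then obtain w where w: "mcs w" "\<forall>c\<in>P. (c, w) \<in> R\<^sup>*" by blast
    obtain p where p: "p \<in> P" using \<open>P \<noteq> {}\<close> by blast
    have xp: "(x, p) \<in> R\<^sup>*" using p by (simp add: P_def)
    have xw: "(x, w) \<in> R\<^sup>*" using rtrancl_trans[OF xp] p w(2) by blast
    have "\<forall>X\<in>C. X \<subseteq> S w"
    proof
      fix X assume "X \<in> C"
      then obtain y where y: "X = S y" "(x, y) \<in> R\<^sup>*" using CA unfolding A_def by blast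
      then have "y \<in> P" using \<open>X \<in> C\<close> unfolding P_def by blast
      then have "(y, w) \<in> R\<^sup>*" using w(2) by blast
      then show "X \<subseteq> S w" using y(1) S_sub[OF w(1), of y] by simp
    qed
    moreover have "S w \<in> A" using xw unfolding A_def by blast
    ultimately show ?thesis by blast
  qed
  then obtain M where M: "M \<in> A" "\<forall>X\<in>A. M \<subseteq> X \<longrightarrow> X = M"
    using Zorn_Lemma2[of A] by blast
  then obtain y where y: "M = S y" "(x, y) \<in> R\<^sup>*" unfolding A_def by blast
  have ym: "mcs y" using Rstar_mcs[OF y(2) x] .
  have "(z, y) \<in> R\<^sup>*" if yz: "(y, z) \<in> R\<^sup>*" for z
  proof -
    have zm: "mcs z" using Rstar_mcs[OF yz ym] .
    have "(x, z) \<in> R\<^sup>*" using y(2) yz by (rule rtrancl_trans)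
    then have "S z \<in> A" unfolding A_def by blast
    moreover have "S y \<subseteq> S z" using S_sub[OF zm, of y] yz by simp
    ultimately have "S z = S y" using M(2) unfolding y(1) by blast
    then have "S z \<subseteq> S y" by simp
    then show ?thesis using S_sub[OF ym, of z] by simp
  qed
  then show ?thesis using y(2) by blast
qed

end
lemma depth_one:
  assumes RV: "R \<subseteq> V \<times> V" and y: "y \<in> V" and fin: "\<forall>z. (y, z) \<in> rstar V R \<longrightarrow> (z, y) \<in> rstar V R"
  shows "depth V R y = enat 1"
proof -
  have rs: "rstar V R = R\<^sup>* \<inter> V \<times> V" using RV unfolding rstar_def
    by (simp add: Int_absorb2)
  define V' where "V' = rstar V R `` {y}"
  have yV': "y \<in> V'" using y by (auto simp: V'_def rs)
  have V'V: "V' \<subseteq> V" by (auto simp: V'_def rs)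
  have clo: "b \<in> V'" if u: "u \<in> V'" and ub: "(u, b) \<in> R" for u b
  proof -
    have "(y, u) \<in> R\<^sup>*" using u by (simp add: V'_def rs)
    then have "(y, b) \<in> R\<^sup>*" using ub by (rule rtrancl_into_rtrancl)
    moreover have "b \<in> V" using ub RV by blast
    ultimately show ?thesis using y by (simp add: V'_def rs)
  qed
  have path: "(a, b) \<in> (R \<inter> V' \<times> V')\<^sup>* \<and> b \<in> V'" if "(a, b) \<in> R\<^sup>*" "a \<in> V'" for a b
    using that(1)
  proof (induction rule: rtrancl_induct)
    case base then show ?case using that(2) by simp
  next
    case (step u b)
    have uV: "u \<in> V'" using step.IH by blast
    have bV: "b \<in> V'" using clo[OF uV step.hyps(2)] .
    have "(u, b) \<in> R \<inter> V' \<times> V'" using uV bV step.hyps(2) by blast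
    with step.IH have "(a, b) \<in> (R \<inter> V' \<times> V')\<^sup>*" by (blast intro: rtrancl_into_rtrancl)
    then show ?case using bV by blast
  qed
  have all: "(a, b) \<in> rstar V' R" if "a \<in> V'" "b \<in> V'" for a b
  proof -
    have "(y, b) \<in> R\<^sup>*" using that(2) by (auto simp: V'_def rs)
    moreover have "(a, y) \<in> R\<^sup>*" using that(1) fin by (auto simp: V'_def rs)
    ultimately have "(a, b) \<in> R\<^sup>*" by (rule rtrancl_trans[rotated])
    then show ?thesis using path that unfolding rstar_def by blast
  qed
  have cl: "cluster V' R a = V'" if "a \<in> V'" for a
    using all that by (auto simp: cluster_def)
  have cls: "clusters V' R = {V'}" using cl yV' by (auto simp: clusters_def)
  have le1: "e \<le> enat 1" if e: "e \<in> {enat (card S) | S. finite S \<and> skel_chain V' R S}" for e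
  proof -
    obtain S where S: "e = enat (card S)" "skel_chain V' R S" using e by blast
    then have "S \<subseteq> {V'}" using cls by (simp add: skel_chain_def)
    then have "card S \<le> card {V'}" by (rule card_mono[rotated]) simp
    then have "card S \<le> 1" by simp
    then show ?thesis using S(1) by simp
  qed
  have yy: "(y, y) \<in> rstar V' R" using all yV' by blast
  have "skel_chain V' R {V'}" unfolding skel_chain_def skel_le_def
    using cls yV' yy by blast
  then have mem: "enat 1 \<in> {enat (card S) | S. finite S \<and> skel_chain V' R S}"
    by (intro CollectI exI[of _ "{V'}"]) simp
  have "height V' R = enat 1" unfolding height_def
    by (rule antisym[OF Sup_least Sup_upper[OF mem]]) (rule le1)
  then show ?thesis by (simp add: depth_def V'_def)
qed

theorem proposition4p2:
  fixes n :: nat and L :: "fm set" and k :: enat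
  assumes "normal_logic n L"
    and "consistent_logic L"
    and "pretransitive n L"
  shows "heavy 1 (canW n L k) (canR n L k)"
proof -
  obtain m where pt: "Imp (dia_iter n (Suc m) (Var 0)) (dia_le n m (Var 0)) \<in> L"
    using assms(3) unfolding pretransitive_def by blast
  interpret canon_pt n L k m using assms(1,2) pt by unfold_locales auto
  have RV: "canR n L k \<subseteq> canW n L k \<times> canW n L k"
    by (auto simp: canR_iff canRi_iff canW_def)
  have rs: "rstar (canW n L k) (canR n L k) = (canR n L k)\<^sup>* \<inter> canW n L k \<times> canW n L k"
    using RV unfolding rstar_def by (simp add: Int_absorb2)
  show ?thesis unfolding heavy_def
  proof (intro ballI impI)
    fix x assume xV: "x \<in> canW n L k"
    then have xm: "mcs x" by (simp add: canW_def)
    obtain y where y: "(x, y) \<in> R\<^sup>*" "\<forall>z. (y, z) \<in> R\<^sup>* \<longrightarrow> (z, y) \<in> R\<^sup>*"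
      using final_point[OF xm] by blast
    have ym: "y \<in> canW n L k" using Rstar_mcs[OF y(1) xm] by (simp add: canW_def)
    have "depth (canW n L k) (canR n L k) y = enat 1"
      by (rule depth_one[OF RV ym]) (use y(2) in \<open>auto simp: rs\<close>)
    then show "\<exists>y'. (x, y') \<in> rstar (canW n L k) (canR n L k) \<and> depth (canW n L k) (canR n L k) y' = enat 1"
      using y(1) xV ym by (auto simp: rs)
  qed
qed

end
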